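(* Let $X$ be a topological space whose one point compactification $X^*=X\cup\{\infty\}$ is metrizable, and let $T\colon X\to X$ be continuous. Then there exist a compact metrizable space $Z$, a continuous map $S\colon Z\to Z$ and a topological embedding $\iota\colon X\to Z$ with $S\circ\iota=\iota\circ T$ (so that, identifying $X$ with $\iota(X)$ with the induced topology, $T$ is the restriction of $S$). Moreover, the map $\pi\colon Z\to X^*$ given by $\pi(\iota(x))=x$ for $x\in X$ and $\pi(z)=\infty$ for $z\notin\iota(X)$ is continuous. *)

theory Defs
  imports "HOL-Analysis.Analysis"
begin

end

theory Submission
  imports Defs
begin

lemma embedding_cancel:
  assumes f: "continuous_map X Y f" and p: "continuous_map Y W p"
    and e: "embedding_map X W (p \<circ> f)"
  shows "embedding_map X Y f"
proof -
  from e obtain k where k: "homeomorphic_maps X (subtopology W ((p \<circ> f) ` topspace X)) (p \<circ> f) k"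
    unfolding embedding_map_def homeomorphic_map_maps by blast
  show ?thesis unfolding embedding_map_def homeomorphic_map_maps homeomorphic_maps_def
  proof (intro exI[of _ "k \<circ> p"] conjI ballI)
    show "continuous_map X (subtopology Y (f ` topspace X)) f"
      using f by (simp add: continuous_map_in_subtopology)
    have "continuous_map (subtopology Y (f ` topspace X)) (subtopology W ((p \<circ> f) ` topspace X)) p"
      using p by (auto simp: continuous_map_in_subtopology continuous_map_from_subtopology image_comp)
    then show "continuous_map (subtopology Y (f ` topspace X)) X (k \<circ> p)"
      using k continuous_map_compose homeomorphic_maps_def by blast
    show "(k \<circ> p) (f x) = x" if "x \<in> topspace X" for x
      using k that by (simp add: homeomorphic_maps_def)
    show "f ((k \<circ> p) y) = y" if "y \<in> topspace (subtopology Y (f ` topspace X))" for y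
      using k that by (auto simp: homeomorphic_maps_def)
  qed
qed

lemma cont_funpow:
  assumes "continuous_map X X T"
  shows "continuous_map X X (T ^^ n)"
proof (induction n)
  case 0
  then show ?case by (simp add: id_def)
next
  case (Suc n)
  then show ?case using continuous_map_compose[OF Suc assms] by (simp add: o_def)
qed

theorem lemma2p3:
  fixes X :: "'a topology" and T :: "'a \<Rightarrow> 'a"
  assumes "metrizable_space (Alexandroff_compactification X)"
    and "continuous_map X X T"
  shows "\<exists>(Z :: (nat \<Rightarrow> 'a option) topology) S \<iota>.
           compact_space Z \<and> metrizable_space Z \<and>
           continuous_map Z Z S \<and>
           embedding_map X Z \<iota> \<and>
           (\<forall>x\<in>topspace X. S (\<iota> x) = \<iota> (T x)) \<and>
           continuous_map Z (Alexandroff_compactification X)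
             (\<lambda>z. if z \<in> \<iota> ` topspace X then Some (inv_into (topspace X) \<iota> z) else None)"
proof -
  define A where "A = Alexandroff_compactification X"
  define P where "P = product_topology (\<lambda>n::nat. A) UNIV"
  define \<iota> where "\<iota> x = (\<lambda>n. Some ((T^^n) x))" for x
  define K where "K = P closure_of (\<iota> ` topspace X)"
  define S where "S z = (\<lambda>n. z (Suc n))" for z :: "nat \<Rightarrow> 'a option"
  have metA: "metrizable_space A" using assms(1) by (simp add: A_def)
  have Tn: "continuous_map X A (\<lambda>x. Some ((T^^n) x))" for n
    using continuous_map_compose[OF cont_funpow[OF assms(2)] continuous_map_Some, of n]
    by (simp add: A_def o_def)
  have contI: "continuous_map X P \<iota>"
    unfolding P_def continuous_map_componentwise_UNIV \<iota>_def using Tn by simp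
  have IK: "\<iota> ` topspace X \<subseteq> K"
    unfolding K_def using contI
    by (intro closure_of_subset) (auto simp: continuous_map_def)
  have closK: "closedin P K" by (simp add: K_def)
  have compP: "compact_space P"
    unfolding P_def by (simp add: compact_space_product_topology A_def)
  have metP: "metrizable_space P"
    unfolding P_def metrizable_space_product_topology using metA
    by (auto intro: countable_subset[of _ UNIV])
  have contS: "continuous_map P P S"
    unfolding P_def continuous_map_componentwise_UNIV S_def
    by (intro allI continuous_map_product_projection) simp
  have SI: "S (\<iota> x) = \<iota> (T x)" for x
    by (simp add: S_def \<iota>_def funpow_swap1)
  have SK: "S ` K \<subseteq> K"
  proof -
    have "S ` K \<subseteq> P closure_of (S ` \<iota> ` topspace X)"
      unfolding K_def by (rule continuous_map_image_closure_subset[OF contS])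
    also have "\<dots> \<subseteq> K" unfolding K_def
      using assms(2) by (intro closure_of_mono) (auto simp: SI continuous_map_def)
    finally show ?thesis .
  qed
  have key: "x \<in> topspace X \<and> z = \<iota> x" if z: "z \<in> K" "z 0 = Some x" for z x
  proof -
    have zP: "z \<in> topspace P" using z closK closedin_subset by blast
    then have "z 0 \<in> topspace A" unfolding P_def by (simp add: PiE_iff)
    then have xX: "x \<in> topspace X" using z by (auto simp: A_def)
    have "z n = \<iota> x n" for n
    proof (rule ccontr)
      assume ne: "z n \<noteq> \<iota> x n"
      have H: "Hausdorff_space A" using metA metrizable_imp_Hausdorff_space by blast
      have "z n \<in> topspace A" using zP unfolding P_def by (simp add: PiE_iff)
      moreover have "\<iota> x n \<in> topspace A" using xX Tn[of n] by (force simp: \<iota>_def continuous_map_def Pi_iff)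
      ultimately obtain U V where UV: "openin A U" "openin A V" "z n \<in> U" "\<iota> x n \<in> V" "disjnt U V"
        using H ne unfolding Hausdorff_space_def by blast
      define Ob where "Ob = {y \<in> topspace X. Some ((T^^n) y) \<in> V}"
      have oOb: "openin X Ob" unfolding Ob_def
        using openin_continuous_map_preimage[OF Tn UV(2)] by simp
      have xOb: "x \<in> Ob" using xX UV(4) by (simp add: Ob_def \<iota>_def)
      define N where "N = {w \<in> topspace P. w 0 \<in> Some ` Ob} \<inter> {w \<in> topspace P. w n \<in> U}"
      have "openin P N" unfolding N_def
        apply (intro openin_Int openin_continuous_map_preimage[where Y=A])
        using oOb UV(1) unfolding P_def A_def
        by (auto intro: continuous_map_product_projection)
      moreover have "z \<in> N" using zP z xOb UV(3) by (simp add: N_def)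
      ultimately obtain y where "y \<in> \<iota> ` topspace X" "y \<in> N"
        using z(1) unfolding K_def in_closure_of by blast
      then obtain y' where y': "y' \<in> topspace X" "\<iota> y' \<in> N" by blast
      then have "y' \<in> Ob" "\<iota> y' n \<in> U" by (auto simp: N_def \<iota>_def)
      then have "\<iota> y' n \<in> V" by (simp add: Ob_def \<iota>_def)
      with \<open>\<iota> y' n \<in> U\<close> UV(5) show False by (auto simp: disjnt_def)
    qed
    then show ?thesis using xX by auto
  qed
  have injI: "inj_on \<iota> (topspace X)"
    by (rule inj_onI) (metis \<iota>_def funpow_0 option.inject)
  have piEq: "z 0 = (if z \<in> \<iota> ` topspace X then Some (inv_into (topspace X) \<iota> z) else None)"
    if "z \<in> topspace (subtopology P K)" for z
  proof (cases "z \<in> \<iota> ` topspace X")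
    case True
    then obtain x where x: "x \<in> topspace X" "z = \<iota> x" by blast
    then have "inv_into (topspace X) \<iota> z = x" using injI by (simp add: inv_into_f_f)
    then show ?thesis using x True by (simp add: \<iota>_def)
  next
    case False
    have zK: "z \<in> K" "z \<in> topspace P" using that by auto
    then have "z 0 \<in> topspace A" unfolding P_def by (simp add: PiE_iff)
    then have "z 0 = None"
      using key[OF zK(1)] False by (cases "z 0") auto
    then show ?thesis using False by simp
  qed
  show ?thesis
  proof (intro exI[of _ "subtopology P K"] exI[of _ S] exI[of _ \<iota>] conjI ballI)
    show "compact_space (subtopology P K)"
      by (intro compact_space_subtopology closedin_compact_space compP closK)
    show "metrizable_space (subtopology P K)"
      using metP by (simp add: metrizable_space_subtopology)
    show "continuous_map (subtopology P K) (subtopology P K) S"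
      using contS SK by (auto simp: continuous_map_in_subtopology continuous_map_from_subtopology)
    have "continuous_map X (subtopology P K) \<iota>"
      using contI IK by (auto simp: continuous_map_in_subtopology)
    moreover have "continuous_map (subtopology P K) A (\<lambda>z. z 0)"
      unfolding P_def by (intro continuous_map_from_subtopology continuous_map_product_projection) simp
    moreover have "(\<lambda>z. z 0) \<circ> \<iota> = Some" by (rule ext) (simp add: \<iota>_def)
    ultimately show "embedding_map X (subtopology P K) \<iota>"
      using embedding_cancel embedding_map_Some unfolding A_def by metis
    show "S (\<iota> x) = \<iota> (T x)" for x by (rule SI)
    show "continuous_map (subtopology P K) (Alexandroff_compactification X)
             (\<lambda>z. if z \<in> \<iota> ` topspace X then Some (inv_into (topspace X) \<iota> z) else None)"
      apply (rule continuous_map_eq[where f="\<lambda>z. z 0"])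
      unfolding P_def A_def
       apply (intro continuous_map_from_subtopology continuous_map_product_projection, simp)
      using piEq unfolding P_def A_def by blast
  qed
qed

end
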